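(* Let $-1$ denote the automorphism of $\mathcal A_\theta^{alg}$ with $U_1\mapsto U_1^{-1}$, $U_2\mapsto U_2^{-1}$, and let $H^0(\mathcal A_\theta^{alg},{}_{-1}\mathcal A_\theta^{alg\ast})$ be the space of formal series $\varphi=\sum\varphi_{n,m}U_1^nU_2^m$ with $((-1)\cdot a)\varphi=\varphi a$ for all $a\in\mathcal A_\theta^{alg}$. Let $\mathbb Z_4$ be generated by the automorphism $\rho$ with $\rho\cdot U_1=U_2^{-1}$, $\rho\cdot U_2=U_1$ (so $\rho^2=-1$), acting on this space termwise. Then $H^0(\mathcal A_\theta^{alg},{}_{-1}\mathcal A_\theta^{alg\ast})^{\mathbb Z_4}\cong\mathbb C^3$.
   Context: Let $\theta\in\mathbb R\setminus\mathbb Q$, $\lambda=e^{2\pi i\theta}$. $\mathcal A_\theta^{alg}$ is the complex algebra of finite sums $\sum a_{n,m}U_1^nU_2^m$ with $U_1,U_2$ invertible and $U_2U_1=\lambda U_1U_2$; formal series $\sum_{(n,m)\in\mathbb Z^2}\varphi_{n,m}U_1^nU_2^m$ with arbitrary coefficients form an $\mathcal A_\theta^{alg}$-bimodule via multiplication. Termwise action of an automorphism $h$: $h\cdot\sum\varphi_{n,m}U_1^nU_2^m=\sum\varphi_{n,m}\,h\cdot(U_1^nU_2^m)$. *)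

theory Defs
  imports "HOL-Analysis.Analysis"
begin

(* Elements of A_theta^alg and formal series sum phi_{n,m} U1^n U2^m are both
   represented by their coefficient functions  int \<times> int \<Rightarrow> complex;
   algebra elements are those with finite support. *)

type_synonym coeffs = "int \<times> int \<Rightarrow> complex"

definition lam :: "real \<Rightarrow> int \<Rightarrow> complex" where
  "lam \<theta> k = exp (2 * of_real pi * \<i> * of_real \<theta> * of_int k)"

definition alg :: "coeffs set" where
  "alg = {a. finite {pq. a pq \<noteq> 0}}"

(* U1^p U2^q \<cdot> U1^n U2^m = \<lambda>^(q n) U1^(p+n) U2^(q+m)  (from U2 U1 = \<lambda> U1 U2) *)
definition left_act :: "real \<Rightarrow> coeffs \<Rightarrow> coeffs \<Rightarrow> coeffs" where
  "left_act \<theta> a \<phi> = (\<lambda>(n, m). \<Sum>(p, q)\<in>{pq. a pq \<noteq> 0}.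
      a (p, q) * lam \<theta> (q * (n - p)) * \<phi> (n - p, m - q))"

(* U1^n U2^m \<cdot> U1^p U2^q = \<lambda>^(m p) U1^(n+p) U2^(m+q) *)
definition right_act :: "real \<Rightarrow> coeffs \<Rightarrow> coeffs \<Rightarrow> coeffs" where
  "right_act \<theta> \<phi> a = (\<lambda>(n, m). \<Sum>(p, q)\<in>{pq. a pq \<noteq> 0}.
      \<phi> (n - p, m - q) * lam \<theta> ((m - q) * p) * a (p, q))"

definition neg_aut :: "coeffs \<Rightarrow> coeffs" where
  "neg_aut a = (\<lambda>(n, m). a (- n, - m))"

(* \<rho>: U1 \<mapsto> U2^(-1), U2 \<mapsto> U1, so
   \<rho>(U1^n U2^m) = U2^(-n) U1^m = \<lambda>^(-n m) U1^m U2^(-n); termwise action on series: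
   coefficient at (p,q) comes from (n,m) = (-q,p) with factor \<lambda>^(q p). *)
definition rho_act :: "real \<Rightarrow> coeffs \<Rightarrow> coeffs" where
  "rho_act \<theta> \<phi> = (\<lambda>(p, q). lam \<theta> (q * p) * \<phi> (- q, p))"

definition H0 :: "real \<Rightarrow> coeffs set" where
  "H0 \<theta> = {\<phi>. \<forall>a\<in>alg. left_act \<theta> (neg_aut a) \<phi> = right_act \<theta> \<phi> a}"

definition H0_Z4 :: "real \<Rightarrow> coeffs set" where
  "H0_Z4 \<theta> = {\<phi>\<in>H0 \<theta>. \<forall>k::nat. (rho_act \<theta> ^^ k) \<phi> = \<phi>}"

end

theory Submission imports Defs begin
definition w :: "real \<Rightarrow> int \<Rightarrow> int \<Rightarrow> complex" where
  "w \<theta> x y = exp (of_real pi * \<i> * of_real \<theta> * of_int x * of_int y)"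

lemma w_shift_x: "w \<theta> (x+2) y = w \<theta> x y * lam \<theta> y"
  unfolding w_def lam_def mult_exp_exp by (rule arg_cong[where f=exp]) (simp add: algebra_simps)
lemma w_shift_y: "w \<theta> x (y+2) = w \<theta> x y * lam \<theta> x"
  unfolding w_def lam_def mult_exp_exp by (rule arg_cong[where f=exp]) (simp add: algebra_simps)
lemma lam_neg: "lam \<theta> (-k) * lam \<theta> k = 1"
  unfolding lam_def mult_exp_exp by simp
lemma lam0: "lam \<theta> 0 = 1" by (simp add: lam_def)
lemma w_rho: "lam \<theta> (q*p) * w \<theta> (-q) p = w \<theta> p q"
  unfolding w_def lam_def mult_exp_exp by (rule arg_cong[where f=exp]) (simp add: algebra_simps)
lemma w_term: "lam \<theta> (-q*(n+p)) * w \<theta> (n+p) (m+q) = w \<theta> (n-p) (m-q) * lam \<theta> ((m-q)*p)"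
  unfolding w_def lam_def mult_exp_exp by (rule arg_cong[where f=exp]) (simp add: algebra_simps)
lemma w_nz: "w \<theta> x y \<noteq> 0" by (simp add: w_def)

lemma H0_delta:
 assumes "\<phi> \<in> H0 \<theta>"
 shows "lam \<theta> (-q*(n+p)) * \<phi>(n+p,m+q) = \<phi>(n-p,m-q) * lam \<theta> ((m-q)*p)"
proof -
 define d where "d = (\<lambda>pq::int\<times>int. if pq = (p,q) then (1::complex) else 0)"
 have supp: "{pq. d pq \<noteq> 0} = {(p,q)}" by (auto simp: d_def)
 have "d \<in> alg" by (simp add: alg_def supp)
 have nsupp: "{pq. neg_aut d pq \<noteq> 0} = {(-p,-q)}" by (auto simp: neg_aut_def d_def split: if_splits)
 from assms \<open>d\<in>alg\<close> have "left_act \<theta> (neg_aut d) \<phi> (n,m) = right_act \<theta> \<phi> d (n,m)" by (auto simp: H0_def)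
 then show ?thesis unfolding left_act_def right_act_def supp nsupp by (simp add: neg_aut_def d_def)
qed

lemma per2: fixes f :: "int \<Rightarrow> 'a" assumes "\<And>x. f(x+2) = f x" shows "f x = f (x mod 2)"
proof -
  have "f (r + 2*k) = f r" for r k
  proof (induct k rule: int_induct[where k=0])
    case base then show ?case by simp
  next
    case (step1 i) then show ?case using assms[of "r+2*i"] by (simp add: algebra_simps)
  next
    case (step2 i) then show ?case using assms[of "r+2*(i-1)"] by (simp add: algebra_simps)
  qed
  from this[of "x mod 2" "x div 2"] show ?thesis by simp
qed
definition F :: "real \<Rightarrow> (int \<times> int \<Rightarrow> complex) \<Rightarrow> coeffs" where
  "F \<theta> g = (\<lambda>(x,y). w \<theta> x y * g (x mod 2, y mod 2))"

lemma lam_nz: "lam \<theta> k \<noteq> 0" by (simp add: lam_def)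

lemma mod2_pm: "(n + p) mod 2 = (n - p) mod (2::int)" by presburger

lemma F_H0: "F \<theta> g \<in> H0 \<theta>"
  unfolding H0_def
proof (clarify)
  fix a assume "a \<in> alg"
  let ?S = "{pq. a pq \<noteq> 0}"
  let ?h = "\<lambda>(p::int,q::int). (-p,-q)"
  have img: "{pq. neg_aut a pq \<noteq> 0} = ?h ` ?S"
    by (force simp: neg_aut_def image_iff)
  have inj: "inj_on ?h ?S" by (auto simp: inj_on_def)
  show "left_act \<theta> (neg_aut a) (F \<theta> g) = right_act \<theta> (F \<theta> g) a"
  proof (rule ext, clarify)
    fix n m
    have "left_act \<theta> (neg_aut a) (F \<theta> g) (n,m) =
      (\<Sum>(p, q)\<in>?h ` ?S. neg_aut a (p, q) * lam \<theta> (q * (n - p)) * F \<theta> g (n - p, m - q))"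
      unfolding left_act_def img by simp
    also have "\<dots> = (\<Sum>(p, q)\<in>?S. neg_aut a (-p, -q) * lam \<theta> (-q * (n + p)) * F \<theta> g (n + p, m + q))"
      by (subst sum.reindex[OF inj]) (simp add: case_prod_beta o_def)
    also have "\<dots> = (\<Sum>(p, q)\<in>?S. F \<theta> g (n - p, m - q) * lam \<theta> ((m - q) * p) * a (p, q))"
    proof (rule sum.cong, simp, clarify)
      fix p q
      have "neg_aut a (-p, -q) * lam \<theta> (-q * (n + p)) * F \<theta> g (n + p, m + q)
         = a (p,q) * (lam \<theta> (-q * (n + p)) * w \<theta> (n+p) (m+q)) * g ((n - p) mod 2, (m - q) mod 2)"
        by (simp add: neg_aut_def F_def mod2_pm)
      also have "\<dots> = a (p,q) * (w \<theta> (n - p) (m - q) * lam \<theta> ((m - q) * p)) * g ((n - p) mod 2, (m - q) mod 2)"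
        by (simp only: w_term)
      also have "\<dots> = F \<theta> g (n - p, m - q) * lam \<theta> ((m - q) * p) * a (p, q)"
        by (simp add: F_def)
      finally show "neg_aut a (-p, -q) * lam \<theta> (-q * (n + p)) * F \<theta> g (n + p, m + q)
         = F \<theta> g (n - p, m - q) * lam \<theta> ((m - q) * p) * a (p, q)" .
    qed
    also have "\<dots> = right_act \<theta> (F \<theta> g) a (n,m)" unfolding right_act_def by simp
    finally show "left_act \<theta> (neg_aut a) (F \<theta> g) (n,m) = right_act \<theta> (F \<theta> g) a (n,m)" .
  qed
qed

lemma H0_F:
  assumes "\<phi> \<in> H0 \<theta>"
  shows "\<phi> = F \<theta> (\<lambda>(r,s). \<phi> (r,s) / w \<theta> r s)"
proof -
  define \<psi> where "\<psi> = (\<lambda>x y. \<phi> (x,y) / w \<theta> x y)"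
  have px: "\<phi> (x+2,y) = lam \<theta> y * \<phi>(x,y)" for x y
    using H0_delta[OF assms, of 0 "x+1" 1 y] by (simp add: lam0 mult.commute add.commute)
  have py: "\<phi> (x,y+2) = lam \<theta> x * \<phi>(x,y)" for x y
  proof -
    have h: "lam \<theta> (-x) * \<phi>(x,y+2) = \<phi>(x,y)"
      using H0_delta[OF assms, of 1 x 0 "y+1"] by (simp add: lam0 add.assoc)
    have l: "lam \<theta> x * lam \<theta> (-x) = 1" using lam_neg[of \<theta> x] by (simp only: mult.commute)
    have "\<phi>(x,y+2) = (lam \<theta> x * lam \<theta> (-x)) * \<phi>(x,y+2)" by (simp only: l mult_1_left)
    also have "\<dots> = lam \<theta> x * (lam \<theta> (-x) * \<phi>(x,y+2))" by (simp only: mult.assoc)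
    also have "\<dots> = lam \<theta> x * \<phi>(x,y)" by (simp only: h)
    finally show ?thesis .
  qed
  have qx: "\<psi> (x+2) y = \<psi> x y" for x y
    unfolding \<psi>_def px w_shift_x using lam_nz[of \<theta> y] by (simp add: mult.commute)
  have qy: "\<psi> x (y+2) = \<psi> x y" for x y
    unfolding \<psi>_def py w_shift_y using lam_nz[of \<theta> x] by (simp add: mult.commute)
  have "\<psi> x y = \<psi> (x mod 2) (y mod 2)" for x y
  proof -
    have "\<psi> x y = \<psi> (x mod 2) y" by (rule per2[of "\<lambda>x. \<psi> x y"]) (rule qx)
    also have "\<dots> = \<psi> (x mod 2) (y mod 2)" by (rule per2[of "\<lambda>y. \<psi> (x mod 2) y"]) (rule qy)
    finally show ?thesis .
  qed
  then have e: "\<phi> (x,y) = w \<theta> x y * \<psi> (x mod 2) (y mod 2)" for x y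
    using w_nz[of \<theta> x y] by (simp add: \<psi>_def)
  have f: "F \<theta> (\<lambda>(r,s). \<phi> (r,s) / w \<theta> r s) (x,y) = w \<theta> x y * \<psi> (x mod 2) (y mod 2)" for x y
    by (simp add: F_def \<psi>_def)
  show ?thesis by (rule ext, clarify, rule trans[OF e f[symmetric]])
qed

lemma negmod2: "(- q) mod 2 = q mod (2::int)" by presburger

lemma rho_F: "rho_act \<theta> (F \<theta> g) = F \<theta> (\<lambda>(r,s). g (s,r))"
proof (rule ext, clarify)
  fix p q
  have "rho_act \<theta> (F \<theta> g) (p,q) = (lam \<theta> (q*p) * w \<theta> (-q) p) * g (q mod 2, p mod 2)"
    by (simp add: rho_act_def F_def negmod2 mult.assoc)
  also have "\<dots> = F \<theta> (\<lambda>(r,s). g (s,r)) (p,q)" by (simp add: w_rho F_def)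
  finally show "rho_act \<theta> (F \<theta> g) (p,q) = F \<theta> (\<lambda>(r,s). g (s,r)) (p,q)" .
qed

lemma mod2_cases: "(x::int) mod 2 = 0 \<or> x mod 2 = 1" by presburger

lemma F_eq_iff: "F \<theta> g = F \<theta> h \<longleftrightarrow> (g(0,0) = h(0,0) \<and> g(0,1) = h(0,1) \<and> g(1,0) = h(1,0) \<and> g(1,1) = h(1,1))"
proof
  assume E: "F \<theta> g = F \<theta> h"
  have "g (r,s) = h (r,s)" if "r \<in> {0,1}" "s \<in> {0,1}" for r s
  proof -
    have "F \<theta> g (r,s) = F \<theta> h (r,s)" using E by simp
    moreover have "r mod 2 = r" "s mod 2 = s" using that by auto
    ultimately show ?thesis using w_nz[of \<theta> r s] by (simp add: F_def)
  qed
  then show "g(0,0) = h(0,0) \<and> g(0,1) = h(0,1) \<and> g(1,0) = h(1,0) \<and> g(1,1) = h(1,1)" by auto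
next
  assume H: "g(0,0) = h(0,0) \<and> g(0,1) = h(0,1) \<and> g(1,0) = h(1,0) \<and> g(1,1) = h(1,1)"
  show "F \<theta> g = F \<theta> h"
  proof (rule ext, clarify)
    fix x y :: int
    have "g (x mod 2, y mod 2) = h (x mod 2, y mod 2)"
      using H mod2_cases[of x] mod2_cases[of y] by auto
    then show "F \<theta> g (x,y) = F \<theta> h (x,y)" by (simp add: F_def)
  qed
qed

lemma funpow_fix: "f x = x \<Longrightarrow> (f ^^ k) x = x"
  by (induct k) auto

lemma H0_Z4_char: "\<phi> \<in> H0_Z4 \<theta> \<longleftrightarrow> (\<exists>g. \<phi> = F \<theta> g \<and> g(0,1) = g(1,0))"
proof
  assume A: "\<phi> \<in> H0_Z4 \<theta>"
  then have "\<phi> \<in> H0 \<theta>" by (simp add: H0_Z4_def)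
  define g where "g = (\<lambda>(r,s). \<phi> (r,s) / w \<theta> r s)"
  have P: "\<phi> = F \<theta> g" unfolding g_def by (rule H0_F[OF \<open>\<phi> \<in> H0 \<theta>\<close>])
  have "(rho_act \<theta> ^^ 1) \<phi> = \<phi>" using A by (simp only: H0_Z4_def mem_Collect_eq)
  then have "rho_act \<theta> (F \<theta> g) = F \<theta> g" by (simp add: P[symmetric])
  then have "F \<theta> (\<lambda>(r,s). g (s,r)) = F \<theta> g" by (simp only: rho_F)
  then have "(\<lambda>(r,s). g (s,r)) (0,1) = g(0,1)" unfolding F_eq_iff by blast
  then have "g(0,1) = g(1,0)" by simp
  with P show "\<exists>g. \<phi> = F \<theta> g \<and> g(0,1) = g(1,0)" by blast
next
  assume "\<exists>g. \<phi> = F \<theta> g \<and> g(0,1) = g(1,0)"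
  then obtain g where P: "\<phi> = F \<theta> g" and S: "g(0,1) = g(1,0)" by blast
  have "rho_act \<theta> \<phi> = \<phi>" unfolding P rho_F F_eq_iff using S by simp
  moreover have "\<phi> \<in> H0 \<theta>" unfolding P by (rule F_H0)
  ultimately show "\<phi> \<in> H0_Z4 \<theta>" unfolding H0_Z4_def by (simp add: funpow_fix)
qed

definition Gs :: "nat \<Rightarrow> int \<times> int \<Rightarrow> complex" where
  "Gs i = (\<lambda>rs. if i = 0 then (if rs = (0,0) then 1 else 0)
                else if i = 1 then (if rs = (1,1) then 1 else 0)
                else (if rs = (0,1) \<or> rs = (1,0) then 1 else 0))"

lemma sum3: "(\<Sum>i<3. f i) = f 0 + f 1 + (f 2 :: complex)" for f :: "nat \<Rightarrow> complex"
  by (simp add: eval_nat_numeral)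

lemma lin: "(\<lambda>k. \<Sum>i<3. c i * F \<theta> (Gs i) k) = F \<theta> (\<lambda>rs. c 0 * Gs 0 rs + c 1 * Gs 1 rs + c 2 * Gs 2 rs)"
  by (rule ext, clarify) (simp add: sum3 F_def algebra_simps)

theorem mainTheorem7:
  fixes \<theta> :: real
  assumes "\<theta> \<notin> \<rat>"
  shows "\<exists>e :: nat \<Rightarrow> coeffs.
           H0_Z4 \<theta> = {\<phi>. \<exists>c :: nat \<Rightarrow> complex. \<phi> = (\<lambda>k. \<Sum>i<3. c i * e i k)}
         \<and> (\<forall>c :: nat \<Rightarrow> complex. (\<lambda>k. \<Sum>i<3. c i * e i k) = (\<lambda>k. 0) \<longrightarrow> (\<forall>i<3. c i = 0))"
proof (intro exI[of _ "\<lambda>i. F \<theta> (Gs i)"] conjI allI impI)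
  show "H0_Z4 \<theta> = {\<phi>. \<exists>c::nat\<Rightarrow>complex. \<phi> = (\<lambda>k. \<Sum>i<3. c i * F \<theta> (Gs i) k)}"
  proof (rule set_eqI, unfold mem_Collect_eq lin H0_Z4_char, rule iffI)
    fix \<phi> assume "\<exists>g. \<phi> = F \<theta> g \<and> g (0, 1) = g (1, 0)"
    then obtain g where P: "\<phi> = F \<theta> g" and S: "g(0,1) = g(1,0)" by blast
    define c where "c = (\<lambda>i::nat. if i = 0 then g(0,0) else if i = 1 then g(1,1) else g(0,1))"
    have "F \<theta> g = F \<theta> (\<lambda>rs. c 0 * Gs 0 rs + c 1 * Gs 1 rs + c 2 * Gs 2 rs)"
      unfolding F_eq_iff using S by (simp add: c_def Gs_def)
    with P show "\<exists>c::nat\<Rightarrow>complex. \<phi> = F \<theta> (\<lambda>rs. c 0 * Gs 0 rs + c 1 * Gs 1 rs + c 2 * Gs 2 rs)" by blast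
  next
    fix \<phi> assume "\<exists>c::nat\<Rightarrow>complex. \<phi> = F \<theta> (\<lambda>rs. c 0 * Gs 0 rs + c 1 * Gs 1 rs + c 2 * Gs 2 rs)"
    then obtain c :: "nat \<Rightarrow> complex" where P: "\<phi> = F \<theta> (\<lambda>rs. c 0 * Gs 0 rs + c 1 * Gs 1 rs + c 2 * Gs 2 rs)" by blast
    show "\<exists>g. \<phi> = F \<theta> g \<and> g (0, 1) = g (1, 0)"
      by (rule exI[of _ "\<lambda>rs. c 0 * Gs 0 rs + c 1 * Gs 1 rs + c 2 * Gs 2 rs"]) (simp add: P Gs_def)
  qed
next
  fix c :: "nat \<Rightarrow> complex" and i :: nat
  assume Z: "(\<lambda>k. \<Sum>i<3. c i * F \<theta> (Gs i) k) = (\<lambda>k. 0)" and i: "i < 3"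
  have "F \<theta> (\<lambda>rs. c 0 * Gs 0 rs + c 1 * Gs 1 rs + c 2 * Gs 2 rs) = F \<theta> (\<lambda>rs. 0)"
  proof -
    have F0: "F \<theta> (\<lambda>rs. 0) = (\<lambda>k. 0)" by (rule ext) (simp add: F_def case_prod_beta)
    have "F \<theta> (\<lambda>rs. c 0 * Gs 0 rs + c 1 * Gs 1 rs + c 2 * Gs 2 rs) = (\<lambda>k. 0)"
      using Z by (simp only: lin)
    then show ?thesis by (simp only: F0)
  qed
  then have "c 0 = 0 \<and> c 1 = 0 \<and> c 2 = 0" unfolding F_eq_iff by (simp add: Gs_def)
  with i show "c i = 0" by (auto simp: less_Suc_eq numeral_3_eq_3 numeral_2_eq_2)
qed
end
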